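(* Consider the spot market described in the context, with fixed leader productions $\mathbf x\in\mathbb{R}_+^M$. Fix a follower $l$ and suppose $f_j=f$ for every follower $j\ne l$ (with $f_l$ arbitrary). Then the spot market has a unique Nash equilibrium $\mathbf y$, and it satisfies, for each $j\ne l$, \[y_j=\Big[\frac1N\Big(\alpha_y+f-\sum_{i=1}^Mx_i-y_l\Big)\Big]_0^k.\]
   Context: Model: $M\ge1$ leaders, $N\ge2$ followers; inverse demand $P(q)=\alpha-\beta q$, $\alpha,\beta>0$; follower marginal cost $c>0$; each follower has capacity $k>0$. Given leader productions $x_1,\dots,x_M\ge0$ and follower forward positions $f_1,\dots,f_N\in\mathbb{R}$, the spot market is the game among the $N$ followers in which follower $j$ chooses $y_j\in[0,k]$ to maximize $P(\sum_i x_i+\sum_{j'}y_{j'})(y_j-f_j)-cy_j$. Normalized follower demand: $\alpha_y=(\alpha-c)/\beta$. For $a\le b$, $[z]_a^b=\min(\max(z,a),b)$. *)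

theory Defs
  imports Complex_Main
begin

definition clamp :: "real \<Rightarrow> real \<Rightarrow> real \<Rightarrow> real" where
  "clamp a b z = min (max z a) b"

definition spot_payoff ::
  "real \<Rightarrow> real \<Rightarrow> real \<Rightarrow> nat \<Rightarrow> nat \<Rightarrow> (nat \<Rightarrow> real) \<Rightarrow> (nat \<Rightarrow> real) \<Rightarrow> (nat \<Rightarrow> real) \<Rightarrow> nat \<Rightarrow> real" where
  "spot_payoff \<alpha> \<beta> c M N x f y j =
     (\<alpha> - \<beta> * ((\<Sum>i<M. x i) + (\<Sum>j'<N. y j'))) * (y j - f j) - c * y j"

definition spot_NE ::
  "real \<Rightarrow> real \<Rightarrow> real \<Rightarrow> real \<Rightarrow> nat \<Rightarrow> nat \<Rightarrow> (nat \<Rightarrow> real) \<Rightarrow> (nat \<Rightarrow> real) \<Rightarrow> (nat \<Rightarrow> real) \<Rightarrow> bool" where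
  "spot_NE \<alpha> \<beta> c k M N x f y \<longleftrightarrow>
     (\<forall>j<N. 0 \<le> y j \<and> y j \<le> k) \<and>
     (\<forall>j<N. \<forall>z. 0 \<le> z \<and> z \<le> k \<longrightarrow>
        spot_payoff \<alpha> \<beta> c M N x f (y(j := z)) j \<le> spot_payoff \<alpha> \<beta> c M N x f y j)"

end

theory Submission
  imports Defs
begin

lemma clamp_char:
  fixes y D k :: real
  assumes k: "k > 0" and y: "0 \<le> y" "y \<le> k"
  shows "(\<forall>z. 0 \<le> z \<and> z \<le> k \<longrightarrow> (z - y) * (D - z) \<le> 0) \<longleftrightarrow> y = clamp 0 k D"
proof
  assume H: "\<forall>z. 0 \<le> z \<and> z \<le> k \<longrightarrow> (z - y) * (D - z) \<le> 0"
  show "y = clamp 0 k D"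
  proof (rule ccontr)
    assume ne: "y \<noteq> clamp 0 k D"
    show False
    proof (cases "y < clamp 0 k D")
      case True
      define z where "z = (y + min k D) / 2"
      have "y < k" "y < D" using True y by (auto simp: clamp_def)
      then have "y < z" "z < D" "0 \<le> z" "z \<le> k" using y unfolding z_def by auto
      then have "(z - y) * (D - z) > 0" by simp
      with H \<open>0 \<le> z\<close> \<open>z \<le> k\<close> show False by force
    next
      case False
      then have T: "y > clamp 0 k D" using ne by simp
      define z where "z = (y + max 0 D) / 2"
      have "y > 0" "y > D" using T k y by (auto simp: clamp_def)
      then have "z < y" "D < z" "0 \<le> z" "z \<le> k" using y unfolding z_def by auto
      then have "(z - y) * (D - z) > 0" by (simp add: mult_neg_neg)
      with H \<open>0 \<le> z\<close> \<open>z \<le> k\<close> show False by force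
    qed
  qed
next
  assume yc: "y = clamp 0 k D"
  show "\<forall>z. 0 \<le> z \<and> z \<le> k \<longrightarrow> (z - y) * (D - z) \<le> 0"
  proof (intro allI impI)
    fix z assume z: "0 \<le> z \<and> z \<le> k"
    consider "D \<le> 0" "y = 0" | "D \<ge> k" "y = k" | "0 \<le> D" "D \<le> k" "y = D"
      using yc k unfolding clamp_def by linarith
    then show "(z - y) * (D - z) \<le> 0"
    proof cases
      case 1 then show ?thesis using z by (simp add: mult_nonneg_nonpos)
    next
      case 2 then show ?thesis using z by (simp add: mult_nonpos_nonneg)
    next
      case 3
      have "(z - y) * (D - z) = - ((z - D)^2)" using 3 by (simp add: power2_eq_square algebra_simps)
      then show ?thesis by simp
    qed
  qed
qed

lemma clamp_fix:
  fixes u v n k :: real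
  assumes n: "n \<ge> 1" and k: "k > 0" and u: "u = clamp 0 k (v - (n - 1) * u)"
  shows "u = clamp 0 k (v / n)"
proof -
  consider "v - (n - 1) * u \<le> 0" "u = 0" | "v - (n - 1) * u \<ge> k" "u = k"
     | "0 \<le> v - (n - 1) * u" "v - (n - 1) * u \<le> k" "u = v - (n - 1) * u"
    using u k unfolding clamp_def by linarith
  then show ?thesis
  proof cases
    case 1
    then have "v / n \<le> 0" using n by (simp add: divide_nonpos_pos)
    then show ?thesis using 1 k by (simp add: clamp_def)
  next
    case 2
    then have "v \<ge> n * k" by (simp add: algebra_simps)
    then have "v / n \<ge> k" using n by (simp add: field_simps)
    then show ?thesis using 2 k by (simp add: clamp_def)
  next
    case 3
    then have "v = n * u" by (simp add: algebra_simps)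
    then have "v / n = u" using n by simp
    then show ?thesis using 3 u by simp
  qed
qed

lemma sum_upd:
  fixes y :: "nat \<Rightarrow> real"
  assumes "j < N"
  shows "(\<Sum>j'<N. (y(j := z)) j') = (\<Sum>j'<N. y j') - y j + z"
proof -
  have "(\<Sum>j'<N. (y(j := z)) j') = (y(j := z)) j + (\<Sum>j'\<in>{..<N} - {j}. (y(j := z)) j')"
    using assms by (subst sum.remove[of _ j]) auto
  also have "(\<Sum>j'\<in>{..<N} - {j}. (y(j := z)) j') = (\<Sum>j'\<in>{..<N} - {j}. y j')"
    by (rule sum.cong) auto
  also have "(\<Sum>j'<N. y j') = y j + (\<Sum>j'\<in>{..<N} - {j}. y j')"
    using assms by (subst sum.remove[of _ j]) auto
  ultimately show ?thesis by simp
qed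

lemma payoff_diff:
  assumes "j < N" and "\<beta> > 0"
  shows "spot_payoff \<alpha> \<beta> c M N x f (y(j := z)) j - spot_payoff \<alpha> \<beta> c M N x f y j
    = \<beta> * ((z - y j) * (((\<alpha> - c) / \<beta> - (\<Sum>i<M. x i) - (\<Sum>j'<N. y j') + f j) - z))"
  using assms unfolding spot_payoff_def sum_upd[OF assms(1)]
  by (simp add: field_simps)

lemma NE_iff:
  assumes "\<beta> > 0" "k > 0"
  shows "spot_NE \<alpha> \<beta> c k M N x f y \<longleftrightarrow>
    (\<forall>j<N. y j = clamp 0 k ((\<alpha> - c) / \<beta> - (\<Sum>i<M. x i) + f j - (\<Sum>j'<N. y j')))"
proof -
  let ?D = "\<lambda>j. (\<alpha> - c) / \<beta> - (\<Sum>i<M. x i) - (\<Sum>j'<N. y j') + f j"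
  have e: "?D j = (\<alpha> - c) / \<beta> - (\<Sum>i<M. x i) + f j - (\<Sum>j'<N. y j')" for j by simp
  have p: "spot_payoff \<alpha> \<beta> c M N x f (y(j := z)) j \<le> spot_payoff \<alpha> \<beta> c M N x f y j
     \<longleftrightarrow> (z - y j) * (?D j - z) \<le> 0" if "j < N" for j z
    using payoff_diff[OF that assms(1), of \<alpha> c M x f y z]
    by (smt (verit) assms(1) mult_le_0_iff)
  have r: "0 \<le> clamp 0 k d" "clamp 0 k d \<le> k" for d using assms by (auto simp: clamp_def)
  show ?thesis
    unfolding spot_NE_def
  proof safe
    fix j assume H: "\<forall>j<N. 0 \<le> y j \<and> y j \<le> k"
      "\<forall>j<N. \<forall>z. 0 \<le> z \<and> z \<le> k \<longrightarrow> spot_payoff \<alpha> \<beta> c M N x f (y(j := z)) j \<le> spot_payoff \<alpha> \<beta> c M N x f y j"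
      and j: "j < N"
    have "\<forall>z. 0 \<le> z \<and> z \<le> k \<longrightarrow> (z - y j) * (?D j - z) \<le> 0" using H(2) j p by blast
    then have "y j = clamp 0 k (?D j)" using clamp_char[OF assms(2), of "y j"] H(1) j by blast
    then show "y j = clamp 0 k ((\<alpha> - c) / \<beta> - (\<Sum>i<M. x i) + f j - (\<Sum>j'<N. y j'))" by (simp add: e)
  next
    fix j assume H: "\<forall>j<N. y j = clamp 0 k ((\<alpha> - c) / \<beta> - (\<Sum>i<M. x i) + f j - (\<Sum>j'<N. y j'))"
      and j: "j < N"
    show "0 \<le> y j" "y j \<le> k" using H j r by metis+
  next
    fix j z assume H: "\<forall>j<N. y j = clamp 0 k ((\<alpha> - c) / \<beta> - (\<Sum>i<M. x i) + f j - (\<Sum>j'<N. y j'))"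
      and j: "j < N" and z: "0 \<le> z" "z \<le> k"
    have yj0: "y j = clamp 0 k ((\<alpha> - c) / \<beta> - (\<Sum>i<M. x i) + f j - (\<Sum>j'<N. y j'))" using H j by blast
    have yj: "y j = clamp 0 k (?D j)" using yj0 by (simp only: e)
    have "0 \<le> y j" "y j \<le> k" using yj r by metis+
    then have "(z - y j) * (?D j - z) \<le> 0" using clamp_char[OF assms(2), of "y j" "?D j"] yj z by blast
    then show "spot_payoff \<alpha> \<beta> c M N x f (y(j := z)) j \<le> spot_payoff \<alpha> \<beta> c M N x f y j"
      using p j by blast
  qed
qed

lemma clamp_mono: "a \<le> b \<Longrightarrow> clamp 0 k a \<le> clamp 0 k b"
  unfolding clamp_def by linarith

theorem proposition1:
  fixes \<alpha> \<beta> c k fl fo :: real and M N l :: nat and x f :: "nat \<Rightarrow> real"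
  assumes "M \<ge> 1" and "N \<ge> 2" and "\<alpha> > 0" and "\<beta> > 0" and "c > 0" and "k > 0"
    and "\<forall>i<M. x i \<ge> 0"
    and "l < N"
    and "\<forall>j<N. j \<noteq> l \<longrightarrow> f j = fo"
  shows "(\<exists>y. spot_NE \<alpha> \<beta> c k M N x f y) \<and>
         (\<forall>y y'. spot_NE \<alpha> \<beta> c k M N x f y \<longrightarrow> spot_NE \<alpha> \<beta> c k M N x f y' \<longrightarrow>
                 (\<forall>j<N. y j = y' j)) \<and>
         (\<forall>y. spot_NE \<alpha> \<beta> c k M N x f y \<longrightarrow>
            (\<forall>j<N. j \<noteq> l \<longrightarrow>
               y j = clamp 0 k ((1 / real N) * ((\<alpha> - c) / \<beta> + fo - (\<Sum>i<M. x i) - y l))))"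
proof -
  define X where "X = (\<Sum>i<M. x i)"
  define a where "a = (\<alpha> - c) / \<beta>"
  define G where "G = (\<lambda>s. \<Sum>j<N. clamp 0 k (a - X + f j - s))"
  have NE: "spot_NE \<alpha> \<beta> c k M N x f y \<longleftrightarrow> (\<forall>j<N. y j = clamp 0 k (a - X + f j - (\<Sum>j'<N. y j')))" for y
    using NE_iff[OF assms(4) assms(6)] unfolding X_def a_def by simp
  have r: "0 \<le> clamp 0 k d" "clamp 0 k d \<le> k" for d using assms(6) by (auto simp: clamp_def)
  have Gmono: "G t \<le> G s" if "s \<le> t" for s t
    unfolding G_def by (rule sum_mono) (rule clamp_mono, use that in linarith)
  have fix_eq: "(\<Sum>j'<N. y j') = G (\<Sum>j'<N. y j')" if "spot_NE \<alpha> \<beta> c k M N x f y" for y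
    unfolding G_def using that[unfolded NE] by (intro sum.cong) auto
  have ex: "\<exists>y. spot_NE \<alpha> \<beta> c k M N x f y"
  proof -
    have cont: "continuous_on {0 .. real N * k} (\<lambda>s. s - G s)"
      unfolding G_def clamp_def by (intro continuous_intros)
    have h0: "0 - G 0 \<le> 0" unfolding G_def using r by (simp add: sum_nonneg)
    have "G (real N * k) \<le> (\<Sum>j<N. k)" unfolding G_def using r by (intro sum_mono) auto
    then have h1: "0 \<le> real N * k - G (real N * k)" by simp
    obtain s where s: "s - G s = 0"
      using IVT'[of "\<lambda>s. s - G s" 0 0 "real N * k", OF h0 h1 _ cont] assms(6) by auto
    define y where "y = (\<lambda>j. clamp 0 k (a - X + f j - s))"
    have "(\<Sum>j'<N. y j') = s" using s unfolding y_def G_def by simp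
    then have "spot_NE \<alpha> \<beta> c k M N x f y" unfolding NE by (simp add: y_def)
    then show ?thesis by blast
  qed
  have uniq: "\<forall>j<N. y j = y' j" if H: "spot_NE \<alpha> \<beta> c k M N x f y" "spot_NE \<alpha> \<beta> c k M N x f y'" for y y'
  proof -
    let ?S = "(\<Sum>j'<N. y j')" and ?S' = "(\<Sum>j'<N. y' j')"
    have e1: "?S = G ?S" and e2: "?S' = G ?S'" using fix_eq H by auto
    have "?S = ?S'"
    proof (rule ccontr)
      assume "?S \<noteq> ?S'"
      then consider "?S < ?S'" | "?S' < ?S" by linarith
      then show False
      proof cases
        case 1 then have "G ?S' \<le> G ?S" by (intro Gmono) simp
        then show False using e1 e2 1 by linarith
      next
        case 2 then have "G ?S \<le> G ?S'" by (intro Gmono) simp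
        then show False using e1 e2 2 by linarith
      qed
    qed
    then show ?thesis using H unfolding NE by metis
  qed
  have form: "y j = clamp 0 k ((1 / real N) * ((\<alpha> - c) / \<beta> + fo - (\<Sum>i<M. x i) - y l))"
    if H: "spot_NE \<alpha> \<beta> c k M N x f y" and j: "j < N" "j \<noteq> l" for y j
  proof -
    let ?S = "(\<Sum>j'<N. y j')"
    define u where "u = clamp 0 k (a - X + fo - ?S)"
    have yo: "y j' = u" if "j' < N" "j' \<noteq> l" for j'
      using H that assms(9) unfolding NE u_def by auto
    have "?S = y l + (\<Sum>j'\<in>{..<N} - {l}. y j')"
      using assms(8) by (subst sum.remove[of _ l]) auto
    also have "(\<Sum>j'\<in>{..<N} - {l}. y j') = (\<Sum>j'\<in>{..<N} - {l}. u)"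
      by (rule sum.cong) (auto intro: yo)
    also have "\<dots> = (real N - 1) * u" using assms(8) assms(2) by (simp add: of_nat_diff)
    finally have S: "?S = y l + (real N - 1) * u" .
    have "u = clamp 0 k ((a - X + fo - y l) - (real N - 1) * u)"
      using u_def S by (simp add: algebra_simps)
    then have "u = clamp 0 k ((a - X + fo - y l) / real N)"
      by (rule clamp_fix[rotated 2]) (use assms(2,6) in auto)
    moreover have "(a - X + fo - y l) / real N = (1 / real N) * ((\<alpha> - c) / \<beta> + fo - (\<Sum>i<M. x i) - y l)"
      unfolding a_def X_def by simp
    ultimately show ?thesis using yo j by simp
  qed
  show ?thesis using ex uniq form by blast
qed

end
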